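(* Let $\tau$ be a real representation of $\mathrm{SO}(D)$ on $\mathbb{R}^N$ and let $\mathcal{D}\in\mathrm{Cov}(\tau,\mathbb{R}^N)$ be strongly regular, i.e. $\mathcal{D}:\mathcal{S}(\mathbb{R}^D)\otimes\mathbb{R}^N\to\mathcal{S}(\mathbb{R}^D)\otimes\mathbb{R}^N$ is a continuous bijection. Let $\mathcal{R}:\mathcal{S}(\mathbb{R}^D)\otimes\mathbb{R}^N\to\mathcal{S}(\mathbb{R}^D)\otimes\mathbb{R}^N$ be a continuous linear map with $\mathcal{R}^2=\mathrm{id}$ mapping $\mathcal{S}(\mathbb{R}^D_{+})\otimes\mathbb{R}^N$ into $\mathcal{S}(\mathbb{R}^D_{-})\otimes\mathbb{R}^N$ and $\mathcal{S}(\mathbb{R}^D_{-})\otimes\mathbb{R}^N$ into $\mathcal{S}(\mathbb{R}^D_{+})\otimes\mathbb{R}^N$. Let $\eta$ be an $\mathcal{R}$-reflection positive generalized random field indexed by $\mathcal{S}(\mathbb{R}^D)\otimes\mathbb{R}^N$, and let $\varphi$ be the weak solution of $\tilde{\mathcal{D}}\varphi=\eta$, with characteristic functional $\Gamma_\varphi(f)=\Gamma_\eta(\mathcal{D}^{-1}f)$. Define $$\mathcal{F}_+=\{f=\mathcal{D}g:\ g\in\mathcal{S}(\mathbb{R}^D_+)\otimes\mathbb{R}^N,\ [\mathcal{R},\mathcal{D}]g=0\}.$$ Then for all finite sequences $c_k\in\mathbb{C}$ and $f_k\in\mathcal{F}_+$, $$\sum_{k,l}c_k\overline{c_l}\,\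Gamma_\varphi(f_k-\mathcal{R}f_l)\ge0.$$
   Context: $\mathcal{S}(\mathbb{R}^D_{\pm})=\{f\in\mathcal{S}(\mathbb{R}^D):\operatorname{supp}f\subset\{x_0\ge0\}\ (\text{resp. }\{x_0\le0\})\}$. $\mathrm{Cov}(\tau,\mathbb{R}^N)$ is the set of operators $\sum_jB_j\partial/\partial x_j+mE$ commuting with all $(T_gf)(x)=\tau(g)f(g^{-1}x)$, $g\in\mathrm{SO}(D)$; $\tilde{\mathcal{D}}$ is the transpose of $\mathcal{D}$. $\Gamma_\xi(f)=E(e^{i\langle\xi,f\rangle})$ is the characteristic functional. The field $\eta$ is $\mathcal{R}$-reflection positive if $\sum_{k,l}c_k\overline{c_l}\Gamma_\eta(f_k-\mathcal{R}f_l)\ge0$ for all finite sequences $c_k\in\mathbb{C}$, $f_k\in\mathcal{S}(\mathbb{R}^D_+)\otimes\mathbb{R}^N$. *)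

theory Defs
  imports "HOL-Analysis.Analysis" "HOL-Probability.Probability" "HOL-Library.Complex_Order"
begin

text \<open>Vector-valued functions R^D -> R^N are modelled as real^'d => real^'n
  (D = CARD('d), N = CARD('n)). The coordinate i0 :: 'd plays the role of x_0.\<close>

type_synonym ('d, 'n) vfun = "real^'d \<Rightarrow> real^'n"

primrec pd :: "'d::finite list \<Rightarrow> ('d, 'n::finite) vfun \<Rightarrow> ('d, 'n) vfun" where
  "pd [] f = f"
| "pd (i # is) f = (\<lambda>x. frechet_derivative (pd is f) (at x) (axis i 1))"

definition smooth_fun :: "('d::finite, 'n::finite) vfun \<Rightarrow> bool" where
  "smooth_fun f \<longleftrightarrow> (\<forall>is x. pd is f differentiable (at x))"

definition schwartz :: "('d::finite, 'n::finite) vfun set" where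
  "schwartz = {f. smooth_fun f \<and>
     (\<forall>is (k::nat). bounded (range (\<lambda>x. (1 + norm x) ^ k *\<^sub>R pd is f x)))}"

definition snorm :: "nat \<Rightarrow> ('d::finite, 'n::finite) vfun \<Rightarrow> real" where
  "snorm m f = Sup {(1 + norm x) ^ k * norm (pd is f x) | x k is. k \<le> m \<and> length is \<le> m}"

definition schwartz_clm :: "(('d::finite, 'n::finite) vfun \<Rightarrow> ('d, 'n) vfun) \<Rightarrow> bool" where
  "schwartz_clm T \<longleftrightarrow> T ` schwartz \<subseteq> schwartz
     \<and> (\<forall>f\<in>schwartz. \<forall>g\<in>schwartz. T (\<lambda>x. f x + g x) = (\<lambda>x. T f x + T g x))
     \<and> (\<forall>a f. f \<in> schwartz \<longrightarrow> T (\<lambda>x. a *\<^sub>R f x) = (\<lambda>x. a *\<^sub>R T f x))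
     \<and> (\<forall>m. \<exists>m' C. \<forall>f\<in>schwartz. snorm m (T f) \<le> C * snorm m' f)"

definition schwartz_functional :: "(('d::finite, 'n::finite) vfun \<Rightarrow> real) \<Rightarrow> bool" where
  "schwartz_functional L \<longleftrightarrow>
       (\<forall>f\<in>schwartz. \<forall>g\<in>schwartz. L (\<lambda>x. f x + g x) = L f + L g)
     \<and> (\<forall>a f. f \<in> schwartz \<longrightarrow> L (\<lambda>x. a *\<^sub>R f x) = a * L f)
     \<and> (\<exists>m C. \<forall>f\<in>schwartz. \<bar>L f\<bar> \<le> C * snorm m f)"

definition S_plus :: "'d \<Rightarrow> ('d::finite, 'n::finite) vfun set" where
  "S_plus i0 = {f \<in> schwartz. closure {x. f x \<noteq> 0} \<subseteq> {x. 0 \<le> x $ i0}}"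

definition S_minus :: "'d \<Rightarrow> ('d::finite, 'n::finite) vfun set" where
  "S_minus i0 = {f \<in> schwartz. closure {x. f x \<noteq> 0} \<subseteq> {x. x $ i0 \<le> 0}}"

definition SO :: "(real^'d^'d::finite) set" where
  "SO = {g. orthogonal_matrix g \<and> det g = 1}"

definition real_rep_SO :: "(real^'d^'d \<Rightarrow> real^'n^'n) \<Rightarrow> bool" where
  "real_rep_SO \<tau> \<longleftrightarrow> (\<forall>g\<in>SO. \<forall>h\<in>SO. \<tau> (g ** h) = \<tau> g ** \<tau> h)
     \<and> \<tau> (mat 1) = mat 1 \<and> continuous_on SO \<tau>"

definition Tact :: "(real^'d^'d \<Rightarrow> real^'n^'n) \<Rightarrow> real^'d^'d \<Rightarrow> ('d::finite, 'n::finite) vfun \<Rightarrow> ('d, 'n) vfun" where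
  "Tact \<tau> g f = (\<lambda>x. \<tau> g *v f (matrix_inv g *v x))"

definition Cov :: "(real^'d^'d \<Rightarrow> real^'n^'n) \<Rightarrow> (('d::finite, 'n::finite) vfun \<Rightarrow> ('d, 'n) vfun) set" where
  "Cov \<tau> = {Dop. (\<exists>(B :: 'd \<Rightarrow> real^'n^'n) (m :: real).
                 \<forall>f\<in>schwartz. Dop f = (\<lambda>x. (\<Sum>j\<in>UNIV. B j *v pd [j] f x) + m *\<^sub>R (mat 1 *v f x)))
            \<and> (\<forall>g\<in>SO. \<forall>f\<in>schwartz. Dop (Tact \<tau> g f) = Tact \<tau> g (Dop f))}"

definition gen_random_field :: "'w measure \<Rightarrow> ('w \<Rightarrow> ('d::finite, 'n::finite) vfun \<Rightarrow> real) \<Rightarrow> bool" where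
  "gen_random_field M X \<longleftrightarrow> prob_space M
     \<and> (\<forall>f\<in>schwartz. (\<lambda>\<omega>. X \<omega> f) \<in> borel_measurable M)
     \<and> (\<forall>\<omega>\<in>space M. schwartz_functional (X \<omega>))"

definition char_functional :: "'w measure \<Rightarrow> ('w \<Rightarrow> ('d::finite, 'n::finite) vfun \<Rightarrow> real) \<Rightarrow> ('d, 'n) vfun \<Rightarrow> complex" where
  "char_functional M X f = (\<integral>\<omega>. cis (X \<omega> f) \<partial>M)"

definition refl_positive_on :: "'w measure \<Rightarrow> ('w \<Rightarrow> ('d::finite, 'n::finite) vfun \<Rightarrow> real)
    \<Rightarrow> (('d, 'n) vfun \<Rightarrow> ('d, 'n) vfun) \<Rightarrow> ('d, 'n) vfun set \<Rightarrow> bool" where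
  "refl_positive_on M X R A \<longleftrightarrow>
     (\<forall>(n::nat) (c :: nat \<Rightarrow> complex) (f :: nat \<Rightarrow> ('d, 'n) vfun). (\<forall>k<n. f k \<in> A) \<longrightarrow>
        0 \<le> (\<Sum>k<n. \<Sum>l<n. c k * cnj (c l) * char_functional M X (\<lambda>x. f k x - R (f l) x)))"

definition refl_positive :: "'d \<Rightarrow> 'w measure \<Rightarrow> ('w \<Rightarrow> ('d::finite, 'n::finite) vfun \<Rightarrow> real)
    \<Rightarrow> (('d, 'n) vfun \<Rightarrow> ('d, 'n) vfun) \<Rightarrow> bool" where
  "refl_positive i0 M X R \<longleftrightarrow> refl_positive_on M X R (S_plus i0)"

definition F_plus :: "'d \<Rightarrow> (('d::finite, 'n::finite) vfun \<Rightarrow> ('d, 'n) vfun)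
    \<Rightarrow> (('d, 'n) vfun \<Rightarrow> ('d, 'n) vfun) \<Rightarrow> ('d, 'n) vfun set" where
  "F_plus i0 Dop R = {Dop g | g. g \<in> S_plus i0 \<and> R (Dop g) = Dop (R g)}"

end

theory Submission
  imports Defs
begin

lemma pd_diff:
  fixes f g :: "('d::finite, 'n::finite) vfun"
  assumes "smooth_fun f" "smooth_fun g"
  shows "pd is (\<lambda>x. f x - g x) = (\<lambda>x. pd is f x - pd is g x)"
proof (induction "is")
  case Nil
  then show ?case by simp
next
  case (Cons i js)
  have "pd (i # js) (\<lambda>x. f x - g x) = (\<lambda>x. frechet_derivative (\<lambda>y. pd js f y - pd js g y) (at x) (axis i 1))"
    by (simp add: Cons.IH)
  also have "\<dots> = (\<lambda>x. pd (i # js) f x - pd (i # js) g x)"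
  proof
    fix x
    have df: "(pd js f has_derivative frechet_derivative (pd js f) (at x)) (at x)"
      using assms(1) unfolding smooth_fun_def using frechet_derivative_works by blast
    have dg: "(pd js g has_derivative frechet_derivative (pd js g) (at x)) (at x)"
      using assms(2) unfolding smooth_fun_def using frechet_derivative_works by blast
    have "((\<lambda>y. pd js f y - pd js g y) has_derivative
        (\<lambda>h. frechet_derivative (pd js f) (at x) h - frechet_derivative (pd js g) (at x) h)) (at x)"
      using has_derivative_diff[OF df dg] .
    hence "frechet_derivative (\<lambda>y. pd js f y - pd js g y) (at x) =
        (\<lambda>h. frechet_derivative (pd js f) (at x) h - frechet_derivative (pd js g) (at x) h)"
      by (rule frechet_derivative_at[symmetric])
    thus "frechet_derivative (\<lambda>y. pd js f y - pd js g y) (at x) (axis i 1) =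
        pd (i # js) f x - pd (i # js) g x" by simp
  qed
  finally show ?case .
qed

lemma schwartz_diff:
  fixes f g :: "('d::finite, 'n::finite) vfun"
  assumes "f \<in> schwartz" "g \<in> schwartz"
  shows "(\<lambda>x. f x - g x) \<in> schwartz"
proof -
  have sf: "smooth_fun f" and sg: "smooth_fun g" using assms unfolding schwartz_def by blast+
  have sm: "smooth_fun (\<lambda>x. f x - g x)"
    unfolding smooth_fun_def
  proof (intro allI)
    fix "is" x
    have a: "pd is f differentiable (at x)" "pd is g differentiable (at x)"
      using sf sg unfolding smooth_fun_def by blast+
    show "pd is (\<lambda>x. f x - g x) differentiable (at x)"
      unfolding pd_diff[OF sf sg] by (rule differentiable_diff[OF a])
  qed
  have "bounded (range (\<lambda>x. (1 + norm x) ^ k *\<^sub>R pd is (\<lambda>x. f x - g x) x))" for "is" k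
  proof -
    have "bounded (range (\<lambda>x. (1 + norm x) ^ k *\<^sub>R pd is f x))"
         "bounded (range (\<lambda>x. (1 + norm x) ^ k *\<^sub>R pd is g x))"
      using assms unfolding schwartz_def mem_Collect_eq by blast+
    from bounded_minus_comp[OF this]
    have "bounded (range (\<lambda>x. (1 + norm x) ^ k *\<^sub>R pd is f x - (1 + norm x) ^ k *\<^sub>R pd is g x))" .
    moreover have "(\<lambda>x. (1 + norm x) ^ k *\<^sub>R pd is (\<lambda>x. f x - g x) x) =
       (\<lambda>x. (1 + norm x) ^ k *\<^sub>R pd is f x - (1 + norm x) ^ k *\<^sub>R pd is g x)"
      unfolding pd_diff[OF sf sg] by (rule ext) (rule scaleR_diff_right)
    ultimately show ?thesis by (simp only:)
  qed
  with sm show ?thesis unfolding schwartz_def mem_Collect_eq by blast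
qed

theorem proposition2p27:
  fixes \<tau> :: "real^'d^'d \<Rightarrow> real^'n^'n"
    and Dop :: "('d::finite, 'n::finite) vfun \<Rightarrow> ('d, 'n) vfun"
    and R :: "('d, 'n) vfun \<Rightarrow> ('d, 'n) vfun"
    and i0 :: 'd
    and M :: "'w measure"
    and \<eta> \<phi> :: "'w \<Rightarrow> ('d, 'n) vfun \<Rightarrow> real"
  assumes rep: "real_rep_SO \<tau>"
    and cov: "Dop \<in> Cov \<tau>"
    and D_cont: "schwartz_clm Dop"
    and D_bij: "bij_betw Dop schwartz schwartz"
    and R_cont: "schwartz_clm R"
    and R_inv: "\<forall>f\<in>schwartz. R (R f) = f"
    and R_pm: "R ` S_plus i0 \<subseteq> S_minus i0"
    and R_mp: "R ` S_minus i0 \<subseteq> S_plus i0"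
    and eta: "gen_random_field M \<eta>"
    and eta_rp: "refl_positive i0 M \<eta> R"
    and phi: "gen_random_field M \<phi>"
    and weak_sol: "\<forall>\<omega>\<in>space M. \<forall>g\<in>schwartz. \<phi> \<omega> (Dop g) = \<eta> \<omega> g"
  shows "\<forall>(n::nat) (c :: nat \<Rightarrow> complex) (f :: nat \<Rightarrow> ('d, 'n) vfun).
           (\<forall>k<n. f k \<in> F_plus i0 Dop R) \<longrightarrow>
           0 \<le> (\<Sum>k<n. \<Sum>l<n. c k * cnj (c l) * char_functional M \<phi> (\<lambda>x. f k x - R (f l) x))"
proof (intro allI impI)
  fix n :: nat and c :: "nat \<Rightarrow> complex" and f :: "nat \<Rightarrow> ('d, 'n) vfun"
  assume F: "\<forall>k<n. f k \<in> F_plus i0 Dop R"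
  define g where "g k = (SOME g. g \<in> S_plus i0 \<and> R (Dop g) = Dop (R g) \<and> f k = Dop g)" for k
  have g: "g k \<in> S_plus i0 \<and> R (Dop (g k)) = Dop (R (g k)) \<and> f k = Dop (g k)" if "k < n" for k
  proof -
    from F that obtain h where "h \<in> S_plus i0 \<and> R (Dop h) = Dop (R h) \<and> f k = Dop h"
      unfolding F_plus_def by auto
    then show ?thesis unfolding g_def
      by (rule someI[where P="\<lambda>g. g \<in> S_plus i0 \<and> R (Dop g) = Dop (R g) \<and> f k = Dop g"])
  qed
  have add: "\<forall>a\<in>schwartz. \<forall>b\<in>schwartz. Dop (\<lambda>x. a x + b x) = (\<lambda>x. Dop a x + Dop b x)"
    using D_cont unfolding schwartz_clm_def by blast
  have eq: "char_functional M \<phi> (\<lambda>x. f k x - R (f l) x) = char_functional M \<eta> (\<lambda>x. g k x - R (g l) x)"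
    if "k < n" "l < n" for k l
  proof -
    have gk: "g k \<in> schwartz" using g[OF that(1)] unfolding S_plus_def by auto
    have "R (g l) \<in> S_minus i0" using g[OF that(2)] R_pm by auto
    hence rgl: "R (g l) \<in> schwartz" unfolding S_minus_def by auto
    define h where "h = (\<lambda>x. g k x - R (g l) x)"
    have hs: "h \<in> schwartz" unfolding h_def using schwartz_diff[OF gk rgl] .
    have "g k = (\<lambda>x. h x + R (g l) x)" unfolding h_def by simp
    hence "Dop (g k) = (\<lambda>x. Dop h x + Dop (R (g l)) x)" using add hs rgl by metis
    moreover have "R (f l) = Dop (R (g l))" using g[OF that(2)] by simp
    moreover have "f k = Dop (g k)" using g[OF that(1)] by simp
    ultimately have Dh: "Dop h = (\<lambda>x. f k x - R (f l) x)"
      by (simp add: fun_eq_iff)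
    show ?thesis unfolding char_functional_def
      by (rule Bochner_Integration.integral_cong[OF refl])
         (use weak_sol hs in \<open>simp flip: Dh add: h_def\<close>)
  qed
  have "0 \<le> (\<Sum>k<n. \<Sum>l<n. c k * cnj (c l) * char_functional M \<eta> (\<lambda>x. g k x - R (g l) x))"
    using eta_rp g unfolding refl_positive_def refl_positive_on_def by blast
  also have "\<dots> = (\<Sum>k<n. \<Sum>l<n. c k * cnj (c l) * char_functional M \<phi> (\<lambda>x. f k x - R (f l) x))"
    using eq by (intro sum.cong refl) auto
  finally show "0 \<le> (\<Sum>k<n. \<Sum>l<n. c k * cnj (c l) * char_functional M \<phi> (\<lambda>x. f k x - R (f l) x))" .
qed

end
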